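(* Let $\langle\mathcal{X},\mathsf{cap},\mathsf{rf}\rangle$ be a $\textsf{VCh-rf}$ instance with $\mathcal{X}=\langle\mathsf{S},\mathsf{po}\rangle$ in which every channel is synchronous, and suppose every send event of $\mathsf{S}$ is related by $\mathsf{rf}$ to exactly one receive event, every receive event of $\mathsf{S}$ is related by $\mathsf{rf}$ to exactly one send event, and for every $(s,r)\in\mathsf{rf}$ the events $s$ and $r$ belong to different threads. Then $\langle\mathcal{X},\mathsf{cap},\mathsf{rf}\rangle$ is consistent if and only if its send-receive graph $G_{\mathsf{sync}}$ is acyclic.
   Context: Channels and events. Each channel $\mathtt{ch}$ has a capacity $\mathsf{cap}(\mathtt{ch})\in\mathbb{N}$; $\mathtt{ch}$ is synchronous if $\mathsf{cap}(\mathtt{ch})=0$ and asynchronous otherwise. An event is a tuple $e=\langle id,\tau,\mathsf{op}(\mathtt{ch},\mathsf{val})\rangle$ with a unique identifier $id$, a thread $\tau$, an operation $\mathsf{op}\in\{\mathtt{snd},\mathtt{rcv}\}$, a channel $\mathtt{ch}$ and a value $\mathsf{val}$. An execution is a finite sequence $\sigma$ of distinct events. $\sigma$ is well-formed (w.r.t. $\mathsf{cap}$) if: (i) for every asynchronous $\mathtt{ch}$ and every prefix $\pi$ of $\sigma$, $R_\pi(\mathtt{ch})\le S_\pi(\mathtt{ch})\le R_\pi(\mathtt{ch})+\mathsf{cap}(\mathtt{ch})$, where $S_\pi(\mathtt{ch})$, $R_\pi(\mathtt{ch})$ are the numbers of send, resp. receive, events on $\mathtt{ch}$ in $\pi$;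 (ii) for every synchronous $\mathtt{ch}$, every send on $\mathtt{ch}$ is immediately followed in $\sigma$ by a receive on $\mathtt{ch}$ of a different thread, and every receive on $\mathtt{ch}$ is immediately preceded in $\sigma$ by a send on $\mathtt{ch}$ of a different thread; (iii) for every channel $\mathtt{ch}$ and every $i$, if $\sigma$ contains an $i$-th receive on $\mathtt{ch}$, then the $i$-th send on $\mathtt{ch}$ has the same value as it. The program order $\mathsf{po}_\sigma$ is the set of pairs $(e,f)$ with $e$ before $f$ in $\sigma$ and in the same thread; the reads-from relation $\mathsf{rf}_\sigma$ is the set of pairs $(s,r)$ such that for some channel $\mathtt{ch}$ and some $i$, $s$ is the $i$-th send and $r$ the $i$-th receive on $\mathtt{ch}$ in $\sigma$. An abstract execution is $\mathcal{X}=\langle \mathsf{S},\mathsf{po}\rangle$ where $\mathsf{S}$ is a finite set of events and $\mathsf{po}$ is a strict order that totally orders the events of each thread and relates no events of different threads. An instance of $\textsf{VCh-rf}$ is $\langle\mathcal{X},\mathsf{cap},\mathsf{rf}\rangle$ where $\mathsf{cap}$ is a capacity function on the channels occurring in $\mathsf{S}$ and $\mathsf{rf}$ is a set of pairs $(s,r)$ of a send and a receive event of $\mathsf{S}$ on the same channel; it is consistent if there is an execution $\sigma$ whose set of events is $\mathsf{S}$, with $\mathsf{po}_\sigma=\mathsf{po}$, $\sigma$ well-formed, and $\mathsf{rf}_\sigma=\mathsf{rf}$. In this problem values are irrelevant (equivalently, matched events are assumed to carry equal values). Send-receive graph. $G_{\mathsf{sync}}=(V,E)$ is the directed graph with $V=\mathsf{rf}$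 (the set of matched pairs $\langle s,r\rangle$) and an edge from $\langle s_1,r_1\rangle$ to $\langle s_2,r_2\rangle$ iff some $e_1\in\{s_1,r_1\}$ is the immediate $\mathsf{po}$-predecessor of some $e_2\in\{s_2,r_2\}$. *)

theory Defs
  imports Main
begin

datatype operation = Snd | Rcv

datatype ('i, 't, 'c, 'v) event =
  Event (eid: 'i) (thr: 't) (eop: operation) (chan: 'c) (val: 'v)

type_synonym 'c capacity = "'c \<Rightarrow> nat"

definition sends_on :: "('i,'t,'c,'v) event list \<Rightarrow> 'c \<Rightarrow> ('i,'t,'c,'v) event list" where
  "sends_on \<pi> ch = filter (\<lambda>e. eop e = Snd \<and> chan e = ch) \<pi>"

definition rcvs_on :: "('i,'t,'c,'v) event list \<Rightarrow> 'c \<Rightarrow> ('i,'t,'c,'v) event list" where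
  "rcvs_on \<pi> ch = filter (\<lambda>e. eop e = Rcv \<and> chan e = ch) \<pi>"

definition well_formed :: "'c capacity \<Rightarrow> ('i,'t,'c,'v) event list \<Rightarrow> bool" where
  "well_formed cap \<sigma> \<longleftrightarrow>
     (\<forall>ch. cap ch > 0 \<longrightarrow> (\<forall>k \<le> length \<sigma>.
        length (rcvs_on (take k \<sigma>) ch) \<le> length (sends_on (take k \<sigma>) ch) \<and>
        length (sends_on (take k \<sigma>) ch) \<le> length (rcvs_on (take k \<sigma>) ch) + cap ch)) \<and>
     (\<forall>i < length \<sigma>. cap (chan (\<sigma>!i)) = 0 \<longrightarrow>
        (eop (\<sigma>!i) = Snd \<longrightarrow> Suc i < length \<sigma> \<and> eop (\<sigma>!Suc i) = Rcv \<and>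
            chan (\<sigma>!Suc i) = chan (\<sigma>!i) \<and> thr (\<sigma>!Suc i) \<noteq> thr (\<sigma>!i)) \<and>
        (eop (\<sigma>!i) = Rcv \<longrightarrow> 0 < i \<and> eop (\<sigma>!(i-1)) = Snd \<and>
            chan (\<sigma>!(i-1)) = chan (\<sigma>!i) \<and> thr (\<sigma>!(i-1)) \<noteq> thr (\<sigma>!i))) \<and>
     (\<forall>ch i. i < length (rcvs_on \<sigma> ch) \<longrightarrow>
        i < length (sends_on \<sigma> ch) \<and> val (sends_on \<sigma> ch ! i) = val (rcvs_on \<sigma> ch ! i))"

definition po_of :: "('i,'t,'c,'v) event list \<Rightarrow> (('i,'t,'c,'v) event \<times> ('i,'t,'c,'v) event) set" where
  "po_of \<sigma> = {(e, f). \<exists>i j. i < j \<and> j < length \<sigma> \<and> \<sigma>!i = e \<and> \<sigma>!j = f \<and> thr e = thr f}"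

definition rf_of :: "('i,'t,'c,'v) event list \<Rightarrow> (('i,'t,'c,'v) event \<times> ('i,'t,'c,'v) event) set" where
  "rf_of \<sigma> = {(s, r). \<exists>ch i. i < length (sends_on \<sigma> ch) \<and> i < length (rcvs_on \<sigma> ch) \<and>
                         s = sends_on \<sigma> ch ! i \<and> r = rcvs_on \<sigma> ch ! i}"

definition abstract_execution ::
  "('i,'t,'c,'v) event set \<Rightarrow> (('i,'t,'c,'v) event \<times> ('i,'t,'c,'v) event) set \<Rightarrow> bool" where
  "abstract_execution S po \<longleftrightarrow>
     finite S \<and> inj_on eid S \<and> po \<subseteq> S \<times> S \<and> irrefl po \<and> trans po \<and>
     (\<forall>e\<in>S. \<forall>f\<in>S. thr e = thr f \<and> e \<noteq> f \<longrightarrow> (e, f) \<in> po \<or> (f, e) \<in> po) \<and>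
     (\<forall>(e, f)\<in>po. thr e = thr f)"

text \<open>A VCh-rf instance \<open>\<langle>\<langle>S,po\<rangle>, cap, rf\<rangle>\<close> (cap is total; only its values on channels of S matter).\<close>
definition vch_rf_instance ::
  "('i,'t,'c,'v) event set \<Rightarrow> (('i,'t,'c,'v) event \<times> ('i,'t,'c,'v) event) set \<Rightarrow> 'c capacity
   \<Rightarrow> (('i,'t,'c,'v) event \<times> ('i,'t,'c,'v) event) set \<Rightarrow> bool" where
  "vch_rf_instance S po cap rf \<longleftrightarrow>
     abstract_execution S po \<and>
     (\<forall>(s, r)\<in>rf. s \<in> S \<and> r \<in> S \<and> eop s = Snd \<and> eop r = Rcv \<and> chan s = chan r)"

definition consistent ::
  "('i,'t,'c,'v) event set \<Rightarrow> (('i,'t,'c,'v) event \<times> ('i,'t,'c,'v) event) set \<Rightarrow> 'c capacity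
   \<Rightarrow> (('i,'t,'c,'v) event \<times> ('i,'t,'c,'v) event) set \<Rightarrow> bool" where
  "consistent S po cap rf \<longleftrightarrow>
     (\<exists>\<sigma>. distinct \<sigma> \<and> set \<sigma> = S \<and> po_of \<sigma> = po \<and> well_formed cap \<sigma> \<and> rf_of \<sigma> = rf)"

definition immediate_pred :: "('a \<times> 'a) set \<Rightarrow> 'a \<Rightarrow> 'a \<Rightarrow> bool" where
  "immediate_pred po e f \<longleftrightarrow> (e, f) \<in> po \<and> \<not> (\<exists>x. (e, x) \<in> po \<and> (x, f) \<in> po)"

definition G_sync :: "('a \<times> 'a) set \<Rightarrow> ('a \<times> 'a) set \<Rightarrow> (('a \<times> 'a) \<times> ('a \<times> 'a)) set" where
  "G_sync po rf = {((s1, r1), (s2, r2)). (s1, r1) \<in> rf \<and> (s2, r2) \<in> rf \<and>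
      (\<exists>e1\<in>{s1, r1}. \<exists>e2\<in>{s2, r2}. immediate_pred po e1 e2)}"

end

theory Submission imports Defs begin

definition blocks :: "('a \<times> 'a) list \<Rightarrow> 'a list" where
  "blocks ps = concat (map (\<lambda>p. [fst p, snd p]) ps)"

lemma blocks_Nil[simp]: "blocks [] = []" and blocks_Cons[simp]: "blocks (p#ps) = fst p # snd p # blocks ps"
  by (simp_all add: blocks_def)

lemma length_blocks[simp]: "length (blocks ps) = 2 * length ps"
  by (induction ps) auto

lemma set_blocks: "set (blocks ps) = fst ` set ps \<union> snd ` set ps"
  by (induction ps) auto

lemma nth_blocks_even: "k < length ps \<Longrightarrow> blocks ps ! (2*k) = fst (ps!k)"
  by (induction ps arbitrary: k) (auto simp: nth_Cons split: nat.splits)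

lemma nth_blocks_odd: "k < length ps \<Longrightarrow> blocks ps ! (Suc (2*k)) = snd (ps!k)"
  by (induction ps arbitrary: k) (auto simp: nth_Cons split: nat.splits)

lemma nth_blocks: "i < 2 * length ps \<Longrightarrow>
   blocks ps ! i = (if even i then fst (ps!(i div 2)) else snd (ps!(i div 2)))"
proof -
  assume i: "i < 2 * length ps"
  have k: "i div 2 < length ps" using i by auto
  show ?thesis
  proof (cases "even i")
    case True
    have "blocks ps ! (2*(i div 2)) = fst (ps!(i div 2))" using k by (rule nth_blocks_even)
    with True show ?thesis by simp
  next
    case False
    have "blocks ps ! Suc (2*(i div 2)) = snd (ps!(i div 2))" using k by (rule nth_blocks_odd)
    moreover have "Suc (2*(i div 2)) = i" using False by presburger
    ultimately show ?thesis using False by simp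
  qed
qed

definition gp :: "('i,'t,'c,'v) event \<times> ('i,'t,'c,'v) event \<Rightarrow> bool" where
  "gp p \<longleftrightarrow> eop (fst p) = Snd \<and> eop (snd p) = Rcv \<and> chan (fst p) = chan (snd p) \<and> thr (fst p) \<noteq> thr (snd p)"

lemma sends_blocks: "\<forall>p\<in>set ps. gp p \<Longrightarrow>
  sends_on (blocks ps) ch = map fst (filter (\<lambda>p. chan (fst p) = ch) ps)"
  by (induction ps) (auto simp: sends_on_def gp_def)

lemma rcvs_blocks: "\<forall>p\<in>set ps. gp p \<Longrightarrow>
  rcvs_on (blocks ps) ch = map snd (filter (\<lambda>p. chan (fst p) = ch) ps)"
  by (induction ps) (auto simp: rcvs_on_def gp_def)

lemma rf_of_blocks: "\<forall>p\<in>set ps. gp p \<Longrightarrow> rf_of (blocks ps) = set ps"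
proof -
  assume g: "\<forall>p\<in>set ps. gp p"
  show ?thesis
  proof (rule set_eqI, clarify)
    fix s r
    show "((s, r) \<in> rf_of (blocks ps)) = ((s, r) \<in> set ps)"
    proof
      assume "(s, r) \<in> rf_of (blocks ps)"
      then obtain ch i where "i < length (filter (\<lambda>p. chan (fst p) = ch) ps)"
        "s = fst (filter (\<lambda>p. chan (fst p) = ch) ps ! i)" "r = snd (filter (\<lambda>p. chan (fst p) = ch) ps ! i)"
        unfolding rf_of_def sends_blocks[OF g] rcvs_blocks[OF g] by auto
      then show "(s, r) \<in> set ps"
        by (metis nth_mem filter_is_subset prod.collapse subsetD)
    next
      assume a: "(s, r) \<in> set ps"
      let ?fl = "filter (\<lambda>p. chan (fst p) = chan s) ps"
      have "(s, r) \<in> set ?fl" using a by simp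
      then obtain i where "i < length ?fl" "?fl ! i = (s, r)" by (metis in_set_conv_nth)
      then show "(s, r) \<in> rf_of (blocks ps)"
        unfolding rf_of_def sends_blocks[OF g] rcvs_blocks[OF g]
        by (auto intro!: exI[of _ "chan s"] exI[of _ i])
    qed
  qed
qed

lemma wf_blocks:
  assumes g: "\<forall>p\<in>set ps. gp p \<and> cap (chan (fst p)) = 0 \<and> val (fst p) = val (snd p)"
  shows "well_formed cap (blocks ps)"
proof -
  have g': "\<forall>p\<in>set ps. gp p" using g by auto
  let ?s = "blocks ps"
  have A: "\<forall>ch. cap ch > 0 \<longrightarrow> (\<forall>k \<le> length ?s.
        length (rcvs_on (take k ?s) ch) \<le> length (sends_on (take k ?s) ch) \<and>
        length (sends_on (take k ?s) ch) \<le> length (rcvs_on (take k ?s) ch) + cap ch)"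
  proof (intro allI impI)
    fix ch k assume c: "cap ch > 0"
    have "\<forall>e\<in>set ?s. chan e \<noteq> ch" using g c by (auto simp: set_blocks gp_def)
    then have "\<forall>e\<in>set (take k ?s). chan e \<noteq> ch" by (meson in_set_takeD)
    then have "sends_on (take k ?s) ch = []" "rcvs_on (take k ?s) ch = []"
      by (auto simp: sends_on_def rcvs_on_def filter_empty_conv)
    then show "length (rcvs_on (take k ?s) ch) \<le> length (sends_on (take k ?s) ch) \<and>
        length (sends_on (take k ?s) ch) \<le> length (rcvs_on (take k ?s) ch) + cap ch" by simp
  qed
  have B: "\<forall>i < length ?s. cap (chan (?s!i)) = 0 \<longrightarrow>
        (eop (?s!i) = Snd \<longrightarrow> Suc i < length ?s \<and> eop (?s!Suc i) = Rcv \<and>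
            chan (?s!Suc i) = chan (?s!i) \<and> thr (?s!Suc i) \<noteq> thr (?s!i)) \<and>
        (eop (?s!i) = Rcv \<longrightarrow> 0 < i \<and> eop (?s!(i-1)) = Snd \<and>
            chan (?s!(i-1)) = chan (?s!i) \<and> thr (?s!(i-1)) \<noteq> thr (?s!i))"
  proof (intro allI impI conjI)
    fix i assume i: "i < length ?s"
    let ?k = "i div 2"
    have k: "?k < length ps" using i by simp
    have gk: "gp (ps!?k)" using g' k by auto
    { assume "eop (?s!i) = Snd"
      then have ev: "even i" using nth_blocks[of i ps] i gk by (auto simp: gp_def split: if_splits)
      then have si: "Suc i < length ?s" using i by (simp, presburger)
      have "?s!i = fst (ps!?k)" using ev i nth_blocks[of i ps] by auto
      moreover have "?s!Suc i = snd (ps!?k)" using ev si nth_blocks[of "Suc i" ps] by auto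
      ultimately show "Suc i < length ?s" "eop (?s!Suc i) = Rcv" "chan (?s!Suc i) = chan (?s!i)"
          "thr (?s!Suc i) \<noteq> thr (?s!i)" using si gk by (auto simp: gp_def) }
    { assume "eop (?s!i) = Rcv"
      then have ev: "odd i" using nth_blocks[of i ps] i gk by (auto simp: gp_def split: if_splits)
      then have si: "0 < i" "(i - 1) div 2 = ?k" "even (i - 1)" by presburger+
      have "?s!i = snd (ps!?k)" using ev i nth_blocks[of i ps] by auto
      moreover have "?s!(i-1) = fst (ps!?k)" using ev si i nth_blocks[of "i - 1" ps] by auto
      ultimately show "0 < i" "eop (?s!(i-1)) = Snd" "chan (?s!(i-1)) = chan (?s!i)"
          "thr (?s!(i-1)) \<noteq> thr (?s!i)" using si gk by (auto simp: gp_def) }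
  qed
  have C: "\<forall>ch i. i < length (rcvs_on ?s ch) \<longrightarrow>
        i < length (sends_on ?s ch) \<and> val (sends_on ?s ch ! i) = val (rcvs_on ?s ch ! i)"
  proof (intro allI impI)
    fix ch i assume "i < length (rcvs_on ?s ch)"
    then have i: "i < length (filter (\<lambda>p. chan (fst p) = ch) ps)" by (simp add: rcvs_blocks[OF g'])
    then have "filter (\<lambda>p. chan (fst p) = ch) ps ! i \<in> set ps" by (metis nth_mem filter_is_subset subsetD)
    then show "i < length (sends_on ?s ch) \<and> val (sends_on ?s ch ! i) = val (rcvs_on ?s ch ! i)"
      using i g by (simp add: rcvs_blocks[OF g'] sends_blocks[OF g'])
  qed
  show ?thesis unfolding well_formed_def using A B C by blast
qed


definition sok :: "'c capacity \<Rightarrow> ('i,'t,'c,'v) event list \<Rightarrow> bool" where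
  "sok cap \<sigma> \<longleftrightarrow> (\<forall>i < length \<sigma>. cap (chan (\<sigma>!i)) = 0 \<longrightarrow>
        (eop (\<sigma>!i) = Snd \<longrightarrow> Suc i < length \<sigma> \<and> eop (\<sigma>!Suc i) = Rcv \<and>
            chan (\<sigma>!Suc i) = chan (\<sigma>!i) \<and> thr (\<sigma>!Suc i) \<noteq> thr (\<sigma>!i)) \<and>
        (eop (\<sigma>!i) = Rcv \<longrightarrow> 0 < i \<and> eop (\<sigma>!(i-1)) = Snd \<and>
            chan (\<sigma>!(i-1)) = chan (\<sigma>!i) \<and> thr (\<sigma>!(i-1)) \<noteq> thr (\<sigma>!i)))"

lemma wf_sok: "well_formed cap \<sigma> \<Longrightarrow> sok cap \<sigma>"
  unfolding well_formed_def sok_def by blast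

lemma sok_tail:
  assumes s: "sok cap (x#y#zs)" and y: "eop y = Rcv"
  shows "sok cap zs"
  unfolding sok_def
proof (intro allI impI conjI)
  fix i assume i: "i < length zs" and c: "cap (chan (zs!i)) = 0"
  have l: "Suc (Suc i) < length (x#y#zs)" using i by simp
  note S = s[unfolded sok_def, rule_format, OF l]
  have S': "(eop (zs!i) = Snd \<longrightarrow> Suc i < length zs \<and> eop (zs!Suc i) = Rcv \<and>
            chan (zs!Suc i) = chan (zs!i) \<and> thr (zs!Suc i) \<noteq> thr (zs!i)) \<and>
        (eop (zs!i) = Rcv \<longrightarrow> eop ((y#zs)!i) = Snd \<and>
            chan ((y#zs)!i) = chan (zs!i) \<and> thr ((y#zs)!i) \<noteq> thr (zs!i))"
    using S c by simp
  { assume "eop (zs!i) = Snd"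
    then show "Suc i < length zs" "eop (zs!Suc i) = Rcv" "chan (zs!Suc i) = chan (zs!i)" "thr (zs!Suc i) \<noteq> thr (zs!i)"
      using S' by auto }
  { assume r: "eop (zs!i) = Rcv"
    then have a: "eop ((y#zs)!i) = Snd" "chan ((y#zs)!i) = chan (zs!i)" "thr ((y#zs)!i) \<noteq> thr (zs!i)" using S' by auto
    show "0 < i" using a(1) y by (cases i) auto
    then obtain j where j: "i = Suc j" by (cases i) auto
    show "eop (zs!(i-1)) = Snd" "chan (zs!(i-1)) = chan (zs!i)" "thr (zs!(i-1)) \<noteq> thr (zs!i)"
      using a j by auto }
qed

lemma decomp:
  "(\<forall>e\<in>set \<sigma>. cap (chan e) = 0) \<Longrightarrow> sok cap \<sigma> \<Longrightarrow> \<exists>ps. \<sigma> = blocks ps \<and> (\<forall>p\<in>set ps. gp p)"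
proof (induction \<sigma> rule: induct_list012)
  case 1
  then show ?case by (intro exI[of _ "[]"]) simp
next
  case (2 x)
  then have "(eop x = Snd \<longrightarrow> Suc 0 < 1) \<and> (eop x = Rcv \<longrightarrow> 0 < (0::nat))"
    using 2(2)[unfolded sok_def, rule_format, of 0] by simp
  then show ?case by (cases "eop x") auto
next
  case (3 x y zs)
  have c0: "cap (chan x) = 0" using 3(3) by simp
  have s0: "(eop x = Snd \<longrightarrow> eop y = Rcv \<and> chan y = chan x \<and> thr y \<noteq> thr x) \<and> (eop x = Rcv \<longrightarrow> 0 < (0::nat))"
    using 3(4)[unfolded sok_def, rule_format, of 0] c0 by simp
  then have xs: "eop x = Snd" by (cases "eop x") auto
  with s0 have g: "gp (x, y)" by (auto simp: gp_def)
  have "sok cap zs" using sok_tail[OF 3(4)] s0 xs by auto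
  moreover have "\<forall>e\<in>set zs. cap (chan e) = 0" using 3(3) by simp
  ultimately obtain ps where "zs = blocks ps" "\<forall>p\<in>set ps. gp p" using 3(1) by blast
  then show ?case using g by (intro exI[of _ "(x,y)#ps"]) auto
qed

lemma acyclic_measure:
  assumes "\<And>x y. (x, y) \<in> R \<Longrightarrow> (g x :: nat) < g y"
  shows "acyclic R"
proof -
  have "(x, y) \<in> R\<^sup>+ \<Longrightarrow> g x < g y" for x y
    by (induction rule: trancl_induct) (auto dest: assms)
  then show ?thesis unfolding acyclic_def by blast
qed

lemma topo_sort:
  assumes "finite V" "wf R"
  shows "\<exists>ps. distinct ps \<and> set ps = V \<and>
     (\<forall>i<length ps. \<forall>j<length ps. (ps!i, ps!j) \<in> R \<longrightarrow> i < j)"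
  using assms(1)
proof (induction V rule: finite_remove_induct)
  case empty
  then show ?case by (intro exI[of _ "[]"]) simp
next
  case (remove A)
  obtain a where a: "a \<in> A" using remove(2) by blast
  obtain z where z: "z \<in> A" "\<And>y. (y, z) \<in> R \<Longrightarrow> y \<notin> A" using wfE_min[OF assms(2) a] by blast
  obtain ps where ps: "distinct ps" "set ps = A - {z}"
     "\<forall>i<length ps. \<forall>j<length ps. (ps!i, ps!j) \<in> R \<longrightarrow> i < j" using remove(4)[OF z(1)] by blast
  show ?case
  proof (intro exI[of _ "z#ps"] conjI allI impI)
    show "distinct (z#ps)" using ps by auto
    show "set (z#ps) = A" using ps z by auto
    fix i j assume ij: "i < length (z#ps)" "j < length (z#ps)" "((z#ps)!i, (z#ps)!j) \<in> R"
    show "i < j"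
    proof (cases j)
      case 0
      have "(z#ps)!i \<in> A" using ij ps z by (metis nth_mem list.set(2) insert_Diff)
      then show ?thesis using ij 0 z(2) by auto
    next
      case (Suc j')
      show ?thesis
      proof (cases i)
        case (Suc i')
        then show ?thesis using ij ps(3) \<open>j = Suc j'\<close> by auto
      qed (simp add: Suc)
    qed
  qed
qed


lemma po_chain:
  assumes fin: "finite po" and ir: "irrefl po" and tr: "trans po"
    and cover: "\<And>x y. (x, y) \<in> po \<Longrightarrow> (\<exists>C\<in>rf. y = fst C \<or> y = snd C)"
  shows "(e, f) \<in> po \<Longrightarrow> A \<in> rf \<Longrightarrow> B \<in> rf \<Longrightarrow> e \<in> {fst A, snd A} \<Longrightarrow> f \<in> {fst B, snd B}
     \<Longrightarrow> (A, B) \<in> (G_sync po rf)\<^sup>+"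
proof (induction "card {x. (e, x) \<in> po \<and> (x, f) \<in> po}" arbitrary: e f A B rule: less_induct)
  case less
  show ?case
  proof (cases "\<exists>x. (e, x) \<in> po \<and> (x, f) \<in> po")
    case False
    then have ip: "immediate_pred po e f" using less.prems(1) by (simp add: immediate_pred_def)
    obtain s1 r1 where A: "A = (s1, r1)" by (cases A)
    obtain s2 r2 where B: "B = (s2, r2)" by (cases B)
    have "(A, B) \<in> G_sync po rf" using ip less.prems A B unfolding G_sync_def by auto
    then show ?thesis by blast
  next
    case True
    then obtain x where x: "(e, x) \<in> po" "(x, f) \<in> po" by blast
    obtain C where C: "C \<in> rf" "x \<in> {fst C, snd C}" using cover[OF x(1)] by blast
    have finb: "finite {y. (e', y) \<in> po \<and> (y, f') \<in> po}" for e' f'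
    proof -
      have "{y. (e', y) \<in> po \<and> (y, f') \<in> po} \<subseteq> snd ` po" by force
      then show ?thesis using fin finite_subset by blast
    qed
    have xx: "(x, x) \<notin> po" using ir by (simp add: irrefl_def)
    have tr': "\<And>a b c. (a, b) \<in> po \<Longrightarrow> (b, c) \<in> po \<Longrightarrow> (a, c) \<in> po"
      using tr by (meson transD)
    have s1: "{y. (e, y) \<in> po \<and> (y, x) \<in> po} \<subseteq> {y. (e, y) \<in> po \<and> (y, f) \<in> po}"
    proof
      fix y assume "y \<in> {y. (e, y) \<in> po \<and> (y, x) \<in> po}"
      then have "(e, y) \<in> po" "(y, x) \<in> po" by auto
      then show "y \<in> {y. (e, y) \<in> po \<and> (y, f) \<in> po}" using tr'[of y x f] x(2) by simp
    qed
    have "x \<in> {y. (e, y) \<in> po \<and> (y, f) \<in> po}" "x \<notin> {y. (e, y) \<in> po \<and> (y, x) \<in> po}"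
      using x xx by auto
    then have "{y. (e, y) \<in> po \<and> (y, x) \<in> po} \<subset> {y. (e, y) \<in> po \<and> (y, f) \<in> po}"
      using s1 by blast
    then have c1: "card {y. (e, y) \<in> po \<and> (y, x) \<in> po} < card {x. (e, x) \<in> po \<and> (x, f) \<in> po}"
      using finb psubset_card_mono by blast
    have s2: "{y. (x, y) \<in> po \<and> (y, f) \<in> po} \<subseteq> {y. (e, y) \<in> po \<and> (y, f) \<in> po}"
    proof
      fix y assume "y \<in> {y. (x, y) \<in> po \<and> (y, f) \<in> po}"
      then have "(x, y) \<in> po" "(y, f) \<in> po" by auto
      then show "y \<in> {y. (e, y) \<in> po \<and> (y, f) \<in> po}" using tr'[of e x y] x(1) by simp
    qed
    have "x \<in> {y. (e, y) \<in> po \<and> (y, f) \<in> po}" "x \<notin> {y. (x, y) \<in> po \<and> (y, f) \<in> po}"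
      using x xx by auto
    then have "{y. (x, y) \<in> po \<and> (y, f) \<in> po} \<subset> {y. (e, y) \<in> po \<and> (y, f) \<in> po}"
      using s2 by blast
    then have c2: "card {y. (x, y) \<in> po \<and> (y, f) \<in> po} < card {x. (e, x) \<in> po \<and> (x, f) \<in> po}"
      using finb psubset_card_mono by blast
    have "(A, C) \<in> (G_sync po rf)\<^sup>+" using less.hyps[OF c1 x(1) less.prems(2) C(1) less.prems(4) C(2)] .
    moreover have "(C, B) \<in> (G_sync po rf)\<^sup>+" using less.hyps[OF c2 x(2) C(1) less.prems(3) C(2) less.prems(5)] .
    ultimately show ?thesis by (rule trancl_trans)
  qed
qed

lemma distinct_blocks:
  "distinct ps \<Longrightarrow> \<forall>p\<in>set ps. gp p \<Longrightarrow>
   (\<forall>p\<in>set ps. \<forall>q\<in>set ps. fst p = fst q \<longrightarrow> p = q) \<Longrightarrow>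
   (\<forall>p\<in>set ps. \<forall>q\<in>set ps. snd p = snd q \<longrightarrow> p = q) \<Longrightarrow> distinct (blocks ps)"
proof (induction ps)
  case Nil then show ?case by simp
next
  case (Cons p ps)
  have g: "gp p" "\<forall>q\<in>set ps. gp q" using Cons.prems(2) by auto
  have "fst p \<notin> set (blocks ps)"
  proof
    assume "fst p \<in> set (blocks ps)"
    then obtain q where q: "q \<in> set ps" "fst p = fst q \<or> fst p = snd q" by (auto simp: set_blocks)
    show False
    proof (cases "fst p = fst q")
      case True then have "p = q" using Cons.prems(3) q by auto
      then show False using Cons.prems(1) q by auto
    next
      case False then have "fst p = snd q" using q by auto
      then show False using g q by (auto simp: gp_def)
    qed
  qed
  moreover have "snd p \<notin> set (blocks ps)"
  proof
    assume "snd p \<in> set (blocks ps)"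
    then obtain q where q: "q \<in> set ps" "snd p = fst q \<or> snd p = snd q" by (auto simp: set_blocks)
    show False
    proof (cases "snd p = snd q")
      case True then have "p = q" using Cons.prems(4) q by auto
      then show False using Cons.prems(1) q by auto
    next
      case False then have "snd p = fst q" using q by auto
      then show False using g q by (auto simp: gp_def)
    qed
  qed
  moreover have "fst p \<noteq> snd p" using g by (auto simp: gp_def)
  moreover have "distinct (blocks ps)"
  proof (rule Cons.IH)
    show "distinct ps" using Cons.prems(1) by simp
    show "\<forall>p\<in>set ps. gp p" using g(2) .
    show "\<forall>p\<in>set ps. \<forall>q\<in>set ps. fst p = fst q \<longrightarrow> p = q" using Cons.prems(3) by simp
    show "\<forall>p\<in>set ps. \<forall>q\<in>set ps. snd p = snd q \<longrightarrow> p = q" using Cons.prems(4) by simp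
  qed
  ultimately show ?case by simp
qed

lemma pos_blocks:
  assumes d: "distinct (blocks ps)" and k: "k < length ps" and i: "i < length (blocks ps)"
    and e: "blocks ps ! i \<in> {fst (ps!k), snd (ps!k)}"
  shows "i = 2*k \<or> i = Suc (2*k)"
proof -
  have "blocks ps ! (2*k) = fst (ps!k)" "blocks ps ! Suc (2*k) = snd (ps!k)"
    using k nth_blocks_even nth_blocks_odd by auto
  moreover have "2*k < length (blocks ps)" "Suc (2*k) < length (blocks ps)" using k by auto
  ultimately show ?thesis
  proof -
    assume h: "blocks ps ! (2*k) = fst (ps!k)" "blocks ps ! Suc (2*k) = snd (ps!k)"
      "2*k < length (blocks ps)" "Suc (2*k) < length (blocks ps)"
    from e have "blocks ps ! i = blocks ps ! (2*k) \<or> blocks ps ! i = blocks ps ! Suc (2*k)"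
      using h(1,2) by simp
    then show ?thesis
    proof
      assume "blocks ps ! i = blocks ps ! (2*k)"
      then have "i = 2*k" using nth_eq_iff_index_eq[OF d i h(3)] by simp
      then show ?thesis ..
    next
      assume "blocks ps ! i = blocks ps ! Suc (2*k)"
      then have "i = Suc (2*k)" using nth_eq_iff_index_eq[OF d i h(4)] by simp
      then show ?thesis ..
    qed
  qed
qed


theorem mainTheorem10:
  fixes S :: "('i,'t,'c,'v) event set"
    and po rf :: "(('i,'t,'c,'v) event \<times> ('i,'t,'c,'v) event) set"
    and cap :: "'c \<Rightarrow> nat"
  assumes inst: "vch_rf_instance S po cap rf"
    and sync: "\<forall>e\<in>S. cap (chan e) = 0"
    and snd_matched: "\<forall>s\<in>S. eop s = Snd \<longrightarrow> (\<exists>!r. (s, r) \<in> rf)"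
    and rcv_matched: "\<forall>r\<in>S. eop r = Rcv \<longrightarrow> (\<exists>!s. (s, r) \<in> rf)"
    and diff_thr: "\<forall>(s, r)\<in>rf. thr s \<noteq> thr r"
    and same_val: "\<forall>(s, r)\<in>rf. val s = val r"
  shows "consistent S po cap rf \<longleftrightarrow> acyclic (G_sync po rf)"
proof -
  have finS: "finite S" and poS: "po \<subseteq> S \<times> S" and ir: "irrefl po" and tr: "trans po"
    and tot: "\<forall>e\<in>S. \<forall>f\<in>S. thr e = thr f \<and> e \<noteq> f \<longrightarrow> (e, f) \<in> po \<or> (f, e) \<in> po"
    and pothr: "\<forall>(e, f)\<in>po. thr e = thr f"
    using inst unfolding vch_rf_instance_def abstract_execution_def by auto
  have rfS: "\<forall>(s, r)\<in>rf. s \<in> S \<and> r \<in> S \<and> eop s = Snd \<and> eop r = Rcv \<and> chan s = chan r"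
    using inst unfolding vch_rf_instance_def by auto
  have gp_rf: "\<forall>p\<in>rf. gp p" using rfS diff_thr by (auto simp: gp_def)
  have cover: "\<exists>C\<in>rf. x = fst C \<or> x = snd C" if xS: "x \<in> S" for x
  proof (cases "eop x")
    case Snd then obtain r where "(x, r) \<in> rf" using snd_matched xS by blast
    then show ?thesis by force
  next
    case Rcv then obtain s where "(s, x) \<in> rf" using rcv_matched xS by blast
    then show ?thesis by force
  qed
  show ?thesis
  proof
    assume "consistent S po cap rf"
    then obtain \<sigma> where \<sigma>: "distinct \<sigma>" "set \<sigma> = S" "po_of \<sigma> = po" "well_formed cap \<sigma>" "rf_of \<sigma> = rf"
      unfolding consistent_def by blast
    obtain ps where ps: "\<sigma> = blocks ps" "\<forall>p\<in>set ps. gp p"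
      using decomp[of \<sigma> cap] wf_sok[OF \<sigma>(4)] sync \<sigma>(2) by blast
    have rfps: "rf = set ps" using \<sigma>(5) rf_of_blocks[OF ps(2)] ps(1) by simp
    define g where "g A = (SOME k. k < length ps \<and> ps!k = A)" for A
    have gA: "g A < length ps \<and> ps!(g A) = A" if "A \<in> set ps" for A
    proof -
      have "\<exists>k. k < length ps \<and> ps!k = A" using that by (simp add: in_set_conv_nth)
      then show ?thesis unfolding g_def by (rule someI_ex)
    qed
    show "acyclic (G_sync po rf)"
    proof (rule acyclic_measure[where g = g])
      fix A B assume "(A, B) \<in> G_sync po rf"
      then obtain e1 e2 where AB: "A \<in> rf" "B \<in> rf" "e1 \<in> {fst A, snd A}" "e2 \<in> {fst B, snd B}"
        "immediate_pred po e1 e2" unfolding G_sync_def by (auto; blast)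
      have "(e1, e2) \<in> po_of \<sigma>" using AB(5) \<sigma>(3) by (simp add: immediate_pred_def)
      then obtain i j where ij: "i < j" "j < length \<sigma>" "\<sigma>!i = e1" "\<sigma>!j = e2" "thr e1 = thr e2"
        unfolding po_of_def by auto
      have a: "g A < length ps" "ps!(g A) = A" using gA AB(1) rfps by auto
      have b: "g B < length ps" "ps!(g B) = B" using gA AB(2) rfps by auto
      have pi: "i = 2 * g A \<or> i = Suc (2 * g A)"
        using pos_blocks[of ps "g A" i] \<sigma>(1) ps(1) a ij AB(3) by auto
      have pj: "j = 2 * g B \<or> j = Suc (2 * g B)"
        using pos_blocks[of ps "g B" j] \<sigma>(1) ps(1) b ij AB(4) by auto
      show "g A < g B"
      proof (rule ccontr)
        assume "\<not> g A < g B"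
        then have eq: "g A = g B" using pi pj ij(1) by presburger
        then have AB': "A = B" using a b by metis
        have ii: "i = 2 * g A" and jj: "j = Suc (2 * g A)" using pi pj ij(1) eq by presburger+
        have "e1 = fst A" using ij(3) ps(1) ii nth_blocks_even[OF a(1)] a(2) by simp
        moreover have "e2 = snd A" using ij(4) ps(1) jj nth_blocks_odd[OF a(1)] a(2) by simp
        ultimately have "e1 = fst A" "e2 = snd A" by auto
        then show False using ij(5) gp_rf AB(1) by (auto simp: gp_def)
      qed
    qed
  next
    assume acy: "acyclic (G_sync po rf)"
    have finrf: "finite rf"
    proof -
      have "rf \<subseteq> S \<times> S" using rfS by auto
      then show ?thesis using finS finite_subset by blast
    qed
    have "G_sync po rf \<subseteq> rf \<times> rf" unfolding G_sync_def by auto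
    then have finG: "finite (G_sync po rf)" using finrf finite_subset by blast
    have wfR: "wf ((G_sync po rf)\<^sup>+)" using finite_acyclic_wf[OF finG acy] by (rule wf_trancl)
    obtain ps where ps: "distinct ps" "set ps = rf"
      "\<forall>i<length ps. \<forall>j<length ps. (ps!i, ps!j) \<in> (G_sync po rf)\<^sup>+ \<longrightarrow> i < j"
      using topo_sort[OF finrf wfR] by blast
    let ?\<sigma> = "blocks ps"
    have gps: "\<forall>p\<in>set ps. gp p" using ps(2) gp_rf by auto
    have uf: "\<forall>p\<in>set ps. \<forall>q\<in>set ps. fst p = fst q \<longrightarrow> p = q"
    proof (intro ballI impI)
      fix p q assume pq: "p \<in> set ps" "q \<in> set ps" "fst p = fst q"
      then have "fst p \<in> S" "eop (fst p) = Snd" using rfS ps(2) by auto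
      then have "\<exists>!r. (fst p, r) \<in> rf" using snd_matched by auto
      moreover have "(fst p, snd p) \<in> rf" using pq(1) ps(2) by simp
      moreover have "(fst p, snd q) \<in> rf" using pq(2,3) ps(2) by simp
      ultimately have "snd p = snd q" by blast
      then show "p = q" using pq by (simp add: prod_eq_iff)
    qed
    have us: "\<forall>p\<in>set ps. \<forall>q\<in>set ps. snd p = snd q \<longrightarrow> p = q"
    proof (intro ballI impI)
      fix p q assume pq: "p \<in> set ps" "q \<in> set ps" "snd p = snd q"
      then have "snd p \<in> S" "eop (snd p) = Rcv" using rfS ps(2) by auto
      then have "\<exists>!s. (s, snd p) \<in> rf" using rcv_matched by auto
      moreover have "(fst p, snd p) \<in> rf" using pq(1) ps(2) by simp
      moreover have "(fst q, snd p) \<in> rf" using pq(2,3) ps(2) by simp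
      ultimately have "fst p = fst q" by blast
      then show "p = q" using pq by (simp add: prod_eq_iff)
    qed
    have dis: "distinct ?\<sigma>" using distinct_blocks[OF ps(1) gps uf us] .
    have setS: "set ?\<sigma> = S"
    proof
      show "set ?\<sigma> \<subseteq> S" using rfS ps(2) by (auto simp: set_blocks)
      show "S \<subseteq> set ?\<sigma>"
      proof
        fix x assume "x \<in> S"
        then obtain C where "C \<in> rf" "x = fst C \<or> x = snd C" using cover by blast
        then show "x \<in> set ?\<sigma>" using ps(2) by (auto simp: set_blocks)
      qed
    qed
    have "\<forall>p\<in>set ps. gp p \<and> cap (chan (fst p)) = 0 \<and> val (fst p) = val (snd p)"
    proof
      fix p assume p: "p \<in> set ps"
      obtain s r where sr: "p = (s, r)" by (cases p)
      have "(s, r) \<in> rf" using p sr ps(2) by simp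
      then have "s \<in> S" "val s = val r" using rfS same_val by auto
      then show "gp p \<and> cap (chan (fst p)) = 0 \<and> val (fst p) = val (snd p)"
        using sr gps p sync by auto
    qed
    then have wfs: "well_formed cap ?\<sigma>" by (rule wf_blocks)
    have rfo: "rf_of ?\<sigma> = rf" using rf_of_blocks[OF gps] ps(2) by simp
    have core: "i < j" if ij: "i < length ?\<sigma>" "j < length ?\<sigma>" "(?\<sigma>!i, ?\<sigma>!j) \<in> po" for i j
    proof -
      have ki: "i div 2 < length ps" and kj: "j div 2 < length ps" using ij by auto
      have A: "ps!(i div 2) \<in> rf" and B: "ps!(j div 2) \<in> rf" using ki kj ps(2) by auto
      have ei: "?\<sigma>!i \<in> {fst (ps!(i div 2)), snd (ps!(i div 2))}" using nth_blocks[of i ps] ij by auto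
      have ej: "?\<sigma>!j \<in> {fst (ps!(j div 2)), snd (ps!(j div 2))}" using nth_blocks[of j ps] ij by auto
      have cov: "\<exists>C\<in>rf. y = fst C \<or> y = snd C" if "(x, y) \<in> po" for x y
        using cover poS that by auto
      have finpo: "finite po" using poS finS finite_subset by blast
      have "(ps!(i div 2), ps!(j div 2)) \<in> (G_sync po rf)\<^sup>+"
        using po_chain[OF finpo ir tr cov ij(3) A B ei ej] .
      then have "i div 2 < j div 2" using ps(3) ki kj by blast
      then show "i < j" by (metis div_le_mono not_le)
    qed
    have poo: "po_of ?\<sigma> = po"
    proof (rule set_eqI, clarify)
      fix e f
      show "((e, f) \<in> po_of ?\<sigma>) = ((e, f) \<in> po)"
      proof
        assume "(e, f) \<in> po_of ?\<sigma>"
        then obtain i j where ij: "i < j" "j < length ?\<sigma>" "?\<sigma>!i = e" "?\<sigma>!j = f" "thr e = thr f"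
          unfolding po_of_def by auto
        have "?\<sigma>!i \<noteq> ?\<sigma>!j" using ij(1,2) dis by (simp add: nth_eq_iff_index_eq)
        then have "e \<noteq> f" using ij by simp
        moreover have "e \<in> S" "f \<in> S" using ij setS by (auto intro: nth_mem)
        ultimately have "(e, f) \<in> po \<or> (f, e) \<in> po" using tot ij(5) by blast
        moreover have "(f, e) \<notin> po" using core[of j i] ij by auto
        ultimately show "(e, f) \<in> po" by blast
      next
        assume ef: "(e, f) \<in> po"
        then have "e \<in> set ?\<sigma>" "f \<in> set ?\<sigma>" using poS setS by auto
        then obtain i j where "i < length ?\<sigma>" "?\<sigma>!i = e" "j < length ?\<sigma>" "?\<sigma>!j = f"
          by (metis in_set_conv_nth)
        moreover have "thr e = thr f" using pothr ef by auto
        ultimately show "(e, f) \<in> po_of ?\<sigma>" using core[of i j] ef unfolding po_of_def by auto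
      qed
    qed
    show "consistent S po cap rf" unfolding consistent_def
      using dis setS poo wfs rfo by blast
  qed
qed

end
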